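(* Let $V\subset(1,1,\dots,1)^\perp\subset\mathbb R^m$ be a self-saturated linear subspace. Then $V$ has an orthonormal basis $\{u_i\}$ such that $u_i\diamond u_j\in\mathbb Ru_i\cup\mathbb Ru_j$ for all $i\neq j$.
   Context: $\mathbb R^m$ carries its standard inner product and standard basis. For $a,b\in\mathbb R^m$, $a\diamond b=(a_1b_1,\dots,a_mb_m)$. A linear subspace $V\subset(1,\dots,1)^\perp$ is self-saturated if $a\diamond b\in V$ for all orthogonal vectors $a,b\in V$. *)

theory Defs
  imports "HOL-Analysis.Analysis"
begin

definition diamond :: "real^'m \<Rightarrow> real^'m \<Rightarrow> real^'m" (infixl "\<diamondsuit>" 70) where
  "a \<diamondsuit> b = (\<chi> i. a $ i * b $ i)"

definition ones :: "real^'m" where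
  "ones = (\<chi> i. 1)"

definition self_saturated :: "(real^'m) set \<Rightarrow> bool" where
  "self_saturated V \<longleftrightarrow> subspace V \<and> (\<forall>v\<in>V. v \<bullet> ones = 0) \<and>
     (\<forall>a\<in>V. \<forall>b\<in>V. a \<bullet> b = 0 \<longrightarrow> a \<diamondsuit> b \<in> V)"

end

theory Submission
  imports Defs
begin

definition sat :: "(real^'m) set \<Rightarrow> bool" where
  "sat V \<longleftrightarrow> (\<forall>a\<in>V. \<forall>b\<in>V. a \<bullet> b = 0 \<longrightarrow> a \<diamondsuit> b \<in> V)"

lemma diamond_comm: "a \<diamondsuit> b = b \<diamondsuit> a"
  by (simp add: diamond_def vec_eq_iff mult.commute)

lemma diamond_scale: "(c *\<^sub>R a) \<diamondsuit> b = c *\<^sub>R (a \<diamondsuit> b)"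
  by (simp add: diamond_def vec_eq_iff)

lemma inner_diamond: "u \<bullet> (a \<diamondsuit> b) = a \<bullet> (u \<diamondsuit> b)"
  by (simp add: diamond_def inner_vec_def mult.commute mult.left_commute)

lemma key:
  fixes V :: "(real^'m) set"
  assumes sub: "subspace V" and st: "sat V" and uV: "u \<in> V" and u0: "u \<noteq> 0"
    and umin: "\<And>v. v \<in> V \<Longrightarrow> v \<noteq> 0 \<Longrightarrow> card {i. u$i \<noteq> 0} \<le> card {i. v$i \<noteq> 0}"
    and wV: "w \<in> V" and uw: "u \<bullet> w = 0"
  shows "\<exists>c. u \<diamondsuit> w = c *\<^sub>R u"
proof -
  obtain i where i: "u$i \<noteq> 0" using u0 by (metis vec_eq_iff zero_index)
  define x where "x = u \<diamondsuit> w"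
  have xV: "x \<in> V" using st uV wV uw unfolding sat_def x_def by blast
  define t where "t = x$i / u$i"
  define y where "y = x - t *\<^sub>R u"
  have yV: "y \<in> V" unfolding y_def using xV uV sub
    by (simp add: subspace_diff subspace_scale)
  have ss: "{j. y$j \<noteq> 0} \<subseteq> {j. u$j \<noteq> 0} - {i}"
    using i by (auto simp: y_def x_def t_def diamond_def)
  have "y = 0"
  proof (rule ccontr)
    assume "y \<noteq> 0"
    then have "card {j. u$j \<noteq> 0} \<le> card {j. y$j \<noteq> 0}" using umin yV by blast
    also have "\<dots> \<le> card ({j. u$j \<noteq> 0} - {i})" by (rule card_mono[OF _ ss]) simp
    also have "\<dots> < card {j. u$j \<noteq> 0}" using i by (intro card_Diff1_less) auto
    finally show False by simp
  qed
  then show ?thesis unfolding y_def x_def by (metis eq_iff_diff_eq_0)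
qed

lemma main_ind:
  fixes V :: "(real^'m) set"
  assumes "subspace V" "sat V"
  shows "\<exists>B. B \<subseteq> V \<and> span B = V
           \<and> pairwise orthogonal B \<and> (\<forall>u\<in>B. norm u = 1)
           \<and> (\<forall>u\<in>B. \<forall>w\<in>B. u \<noteq> w \<longrightarrow>
                 u \<diamondsuit> w \<in> range (\<lambda>c. c *\<^sub>R u) \<union> range (\<lambda>c. c *\<^sub>R w))"
  using assms
proof (induction "dim V" arbitrary: V rule: less_induct)
  case less
  show ?case
  proof (cases "V \<subseteq> {0}")
    case True
    then have "V = {0}" using less.prems subspace_0 by blast
    then show ?thesis by (intro exI[of _ "{}"]) auto
  next
    case False
    then obtain v where v: "v \<in> V" "v \<noteq> 0" by blast
    obtain u where u: "u \<in> V \<and> u \<noteq> 0"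
      and umin: "\<And>z. z \<in> V \<and> z \<noteq> 0 \<Longrightarrow> card {i. u$i \<noteq> 0} \<le> card {i. z$i \<noteq> 0}"
      using ex_has_least_nat[of "\<lambda>z. z \<in> V \<and> z \<noteq> 0" v "\<lambda>z. card {i. z$i \<noteq> 0}"] v by blast
    have keyu: "\<And>w. w \<in> V \<Longrightarrow> u \<bullet> w = 0 \<Longrightarrow> \<exists>c. u \<diamondsuit> w = c *\<^sub>R u"
      using key[OF less.prems] u umin by blast
    define V' where "V' = {w \<in> V. u \<bullet> w = 0}"
    have subV': "subspace V'" unfolding V'_def subspace_def using less.prems(1)
      by (auto simp: subspace_def inner_add_right)
    have satV': "sat V'" unfolding sat_def
    proof (intro ballI impI)
      fix a b assume a: "a \<in> V'" and b: "b \<in> V'" and ab: "a \<bullet> b = 0"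
      have "a \<diamondsuit> b \<in> V" using less.prems(2) a b ab unfolding sat_def V'_def by blast
      moreover obtain c where "u \<diamondsuit> b = c *\<^sub>R u" using keyu b unfolding V'_def by blast
      then have "u \<bullet> (a \<diamondsuit> b) = 0" using a unfolding inner_diamond V'_def
        by (simp add: inner_commute)
      ultimately show "a \<diamondsuit> b \<in> V'" unfolding V'_def by blast
    qed
    have "u \<notin> V'" using u unfolding V'_def by simp
    then have "V' \<subset> V" using u unfolding V'_def by blast
    then have "dim V' < dim V"
      using dim_psubset[of V' V] subV' less.prems(1) by (metis span_eq_iff)
    then obtain B' where B': "B' \<subseteq> V'" "span B' = V'" "pairwise orthogonal B'"
       "\<forall>u\<in>B'. norm u = 1"
       "\<forall>u\<in>B'. \<forall>w\<in>B'. u \<noteq> w \<longrightarrow>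
                 u \<diamondsuit> w \<in> range (\<lambda>c. c *\<^sub>R u) \<union> range (\<lambda>c. c *\<^sub>R w)"
      using less.hyps[OF _ subV' satV'] by blast
    define e where "e = inverse (norm u) *\<^sub>R u"
    have nu: "norm u \<noteq> 0" using u by simp
    have eV: "e \<in> V" unfolding e_def using u less.prems(1) by (simp add: subspace_scale)
    have ne: "norm e = 1" unfolding e_def using nu by simp
    have eorth: "\<And>w. w \<in> B' \<Longrightarrow> orthogonal e w"
      using B'(1) unfolding V'_def e_def orthogonal_def by auto
    have eprod: "\<And>w. w \<in> B' \<Longrightarrow> e \<diamondsuit> w \<in> range (\<lambda>c. c *\<^sub>R e)"
    proof -
      fix w assume "w \<in> B'"
      then obtain c where "u \<diamondsuit> w = c *\<^sub>R u" using keyu B'(1) unfolding V'_def by blast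
      then have "e \<diamondsuit> w = c *\<^sub>R e" unfolding e_def diamond_scale by simp
      then show "e \<diamondsuit> w \<in> range (\<lambda>c. c *\<^sub>R e)" by blast
    qed
    have eB': "e \<notin> B'" using eorth ne by (metis orthogonal_self norm_zero zero_neq_one)
    show ?thesis
    proof (intro exI[of _ "insert e B'"] conjI)
      show "insert e B' \<subseteq> V" using eV B'(1) unfolding V'_def by auto
      show "span (insert e B') = V"
      proof
        show "span (insert e B') \<subseteq> V"
          using eV B'(1) less.prems(1) unfolding V'_def by (metis (no_types, lifting) insert_subset mem_Collect_eq span_minimal subsetI subset_eq)
        show "V \<subseteq> span (insert e B')"
        proof
          fix x assume x: "x \<in> V"
          have "x - (e \<bullet> x) *\<^sub>R e \<in> V'"
          proof -
            have "x - (e \<bullet> x) *\<^sub>R e \<in> V"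
              using x eV less.prems(1) by (simp add: subspace_diff subspace_scale)
            moreover have "u \<bullet> e = norm u"
              unfolding e_def using nu by (simp add: dot_square_norm power2_eq_square)
            moreover have "e \<bullet> x = inverse (norm u) * (u \<bullet> x)" unfolding e_def by simp
            ultimately show ?thesis unfolding V'_def using nu
              by (simp add: inner_diff_right)
          qed
          then have "x - (e \<bullet> x) *\<^sub>R e \<in> span (insert e B')"
            using B'(2) span_mono[of B' "insert e B'"] by auto
          moreover have "(e \<bullet> x) *\<^sub>R e \<in> span (insert e B')"
            by (simp add: span_base span_scale)
          ultimately have "x - (e \<bullet> x) *\<^sub>R e + (e \<bullet> x) *\<^sub>R e \<in> span (insert e B')"
            by (rule span_add)
          then show "x \<in> span (insert e B')" by simp
        qed
      qed
      show "pairwise orthogonal (insert e B')"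
        using B'(3) eorth by (auto simp: pairwise_insert orthogonal_commute)
      show "\<forall>u\<in>insert e B'. norm u = 1" using B'(4) ne by auto
      show "\<forall>x\<in>insert e B'. \<forall>w\<in>insert e B'. x \<noteq> w \<longrightarrow>
                 x \<diamondsuit> w \<in> range (\<lambda>c. c *\<^sub>R x) \<union> range (\<lambda>c. c *\<^sub>R w)"
        using B'(5) eprod by (auto simp: diamond_comm)
    qed
  qed
qed

theorem mainTheorem9:
  fixes V :: "(real^'m) set"
  assumes "subspace V"
    and "\<forall>v\<in>V. v \<bullet> ones = 0"
    and "self_saturated V"
  shows "\<exists>B. B \<subseteq> V \<and> independent B \<and> span B = V
           \<and> pairwise orthogonal B \<and> (\<forall>u\<in>B. norm u = 1)
           \<and> (\<forall>u\<in>B. \<forall>w\<in>B. u \<noteq> w \<longrightarrow>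
                 u \<diamondsuit> w \<in> range (\<lambda>c. c *\<^sub>R u) \<union> range (\<lambda>c. c *\<^sub>R w))"
proof -
  have "sat V" using assms(3) unfolding self_saturated_def sat_def by blast
  then obtain B where B: "B \<subseteq> V" "span B = V" "pairwise orthogonal B" "\<forall>u\<in>B. norm u = 1"
    "\<forall>u\<in>B. \<forall>w\<in>B. u \<noteq> w \<longrightarrow> u \<diamondsuit> w \<in> range (\<lambda>c. c *\<^sub>R u) \<union> range (\<lambda>c. c *\<^sub>R w)"
    using main_ind[OF assms(1)] by blast
  have "0 \<notin> B" using B(4) by force
  then have "independent B" using B(3) pairwise_orthogonal_independent by blast
  then show ?thesis using B by blast
qed

end
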